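(* For every positive integer $k$, as formal power series in $q$, $$\sum_{n\ge 1}\mathrm{spt}k_d(n)\,q^n=P_k(q)\,(-q;q)_\infty+(-1)^k (q;q)_{k-1},$$ where the polynomials $P_k(q)$ are defined by $P_1(q)=1$ and $P_k(q)=(q^{k-1}-1)P_{k-1}(q)+q^{k-1}$ for $k>1$.
   Context: For a partition $\pi$, $s(\pi)$ denotes its smallest part. $\mathrm{Spt}k_d(n)$ is the set of partitions $\pi$ of $n$ in which the smallest part $s(\pi)$ occurs exactly $k$ times and all remaining parts (those larger than $s(\pi)$) are pairwise distinct; $\mathrm{spt}k_d(n)=|\mathrm{Spt}k_d(n)|$. Notation: $(a;q)_0=1$, $(a;q)_n=\prod_{j=0}^{n-1}(1-aq^j)$, $(a;q)_\infty=\prod_{j\ge 0}(1-aq^j)$. *)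

theory Defs
  imports "HOL-Library.Multiset" "HOL-Computational_Algebra.Formal_Power_Series"
begin

definition Sptkd :: "nat \<Rightarrow> nat \<Rightarrow> nat multiset set" where
  "Sptkd k n = {p. (\<forall>x\<in>#p. 0 < x) \<and> sum_mset p = n \<and> p \<noteq> {#} \<and>
      count p (Min (set_mset p)) = k \<and>
      (\<forall>x\<in>#p. Min (set_mset p) < x \<longrightarrow> count p x = 1)}"

definition sptkd :: "nat \<Rightarrow> nat \<Rightarrow> nat" where
  "sptkd k n = card (Sptkd k n)"

definition qpoch :: "int fps \<Rightarrow> nat \<Rightarrow> int fps" where
  "qpoch a n = (\<Prod>j<n. 1 - a * fps_X ^ j)"

text \<open>(a;q)_infinity: limit of the finite products in the standard
  (X-adic) metric topology of formal power series.\<close>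
definition qpoch_inf :: "int fps \<Rightarrow> int fps" where
  "qpoch_inf a = lim (\<lambda>n. qpoch a n)"

fun Ppoly :: "nat \<Rightarrow> int fps" where
  "Ppoly 0 = 1"
| "Ppoly (Suc 0) = 1"
| "Ppoly (Suc (Suc k)) = (fps_X ^ (Suc k) - 1) * Ppoly (Suc k) + fps_X ^ (Suc k)"

end

theory Submission
  imports Defs
begin


lemma qpoch_negX_Suc: "qpoch (- fps_X) (Suc N) = qpoch (- fps_X) N + fps_X^(Suc N) * qpoch (- fps_X) N"
  by (simp add: qpoch_def algebra_simps)

lemma qpoch_stab: "j \<le> N \<Longrightarrow> fps_nth (qpoch (- fps_X) N) j = fps_nth (qpoch (- fps_X) j) j"
proof (induction N rule: dec_induct)
  case base then show ?case by simp
next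
  case (step N) then show ?case
    by (simp only: qpoch_negX_Suc fps_add_nth fps_X_power_mult_nth) simp
qed

lemma qpoch_inf_nth: "j \<le> N \<Longrightarrow> fps_nth (qpoch_inf (- fps_X)) j = fps_nth (qpoch (- fps_X) N) j"
proof -
  assume jN: "j \<le> N"
  let ?L = "Abs_fps (\<lambda>j. fps_nth (qpoch (- fps_X) j) j)"
  have "(\<lambda>n. qpoch (- fps_X) n) \<longlonglongrightarrow> ?L"
  proof (rule tendsto_fpsI)
    fix n show "eventually (\<lambda>x. fps_nth (qpoch (- fps_X) x) n = fps_nth ?L n) sequentially"
      using eventually_ge_at_top[of n] by eventually_elim (subst fps_nth_Abs_fps, erule qpoch_stab)
  qed
  then have "qpoch_inf (- fps_X) = ?L" unfolding qpoch_inf_def by (rule limI)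
  then show ?thesis using qpoch_stab[OF jN] by (simp only: fps_nth_Abs_fps)
qed


definition G :: "nat \<Rightarrow> nat \<Rightarrow> int fps" where
  "G N s = (\<Prod>j\<in>{s<..N}. 1 + fps_X ^ j)"

definition F :: "nat \<Rightarrow> nat \<Rightarrow> int fps" where
  "F k N = (\<Sum>t<N. fps_X ^ (k * Suc t) * G N (Suc t))"

lemma G_step: "t < N \<Longrightarrow> G N t = (1 + fps_X ^ Suc t) * G N (Suc t)"
proof -
  assume "t < N"
  then have "{t<..N} = insert (Suc t) {Suc t<..N}" by auto
  then show ?thesis unfolding G_def by simp
qed

lemma G_N: "G N N = 1" by (simp add: G_def)

lemma G0: "G N 0 = qpoch (- fps_X) N"
proof -
  have "{0<..N} = Suc ` {..<N}"
  proof (intro equalityI subsetI)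
    fix x assume "x \<in> {0<..N}" then show "x \<in> Suc ` {..<N}" by (intro image_eqI[of _ _ "x - 1"]) auto
  qed auto
  then show ?thesis unfolding G_def qpoch_def
    by (simp add: prod.reindex)
qed

lemma F_rec: "F k N + F (Suc k) N = fps_X ^ k * (G N 0 + F k N - fps_X ^ (k * N))"
proof -
  have "F k N + F (Suc k) N = (\<Sum>t<N. fps_X ^ (k * Suc t) * ((1 + fps_X ^ Suc t) * G N (Suc t)))"
    unfolding F_def sum.distrib[symmetric] by (intro sum.cong) (auto simp: algebra_simps power_add)
  also have "\<dots> = (\<Sum>t<N. fps_X ^ k * (fps_X ^ (k * t) * G N t))"
    by (intro sum.cong) (auto simp: G_step power_add mult_ac)
  also have "\<dots> = fps_X ^ k * (\<Sum>t<N. fps_X ^ (k * t) * G N t)"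
    by (simp add: sum_distrib_left)
  also have "(\<Sum>t<N. fps_X ^ (k * t) * G N t) = (\<Sum>t<Suc N. fps_X ^ (k * t) * G N t) - fps_X ^ (k * N)"
    by (simp add: G_N)
  also have "(\<Sum>t<Suc N. fps_X ^ (k * t) * G N t) = G N 0 + F k N"
    unfolding F_def by (subst sum.lessThan_Suc_shift) simp
  finally show ?thesis by simp
qed

lemma F_closed: "1 \<le> k \<Longrightarrow> \<exists>R. F k N = Ppoly k * G N 0 + (-1) ^ k * qpoch fps_X (k - 1) + fps_X ^ Suc N * R"
proof (induction k rule: dec_induct)
  case base
  have "F 1 N = G N 0 - 1" using F_rec[of 0 N] by (simp add: algebra_simps)
  then show ?case by (intro exI[of _ 0]) (simp add: qpoch_def)
next
  case (step k)
  then obtain R where R: "F k N = Ppoly k * G N 0 + (-1) ^ k * qpoch fps_X (k - 1) + fps_X ^ Suc N * R" by blast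
  obtain m where k: "k = Suc m" using step(1) by (cases k) auto
  have Fs: "F (Suc k) N = (fps_X ^ k - 1) * F k N + fps_X ^ k * G N 0 - fps_X ^ (k * Suc N)"
    using F_rec[of k N] by (simp add: algebra_simps power_add)
  have P: "Ppoly (Suc k) = (fps_X ^ k - 1) * Ppoly k + fps_X ^ k" using k by simp
  have Q: "qpoch fps_X (Suc k - 1) = qpoch fps_X (k - 1) * (1 - fps_X ^ k)"
    using k by (simp add: qpoch_def mult_ac)
  have E: "fps_X ^ (k * Suc N) = fps_X ^ Suc N * (fps_X ^ (m * Suc N) :: int fps)"
    using k by (simp add: power_add)
  show ?case
    by (rule exI[of _ "(fps_X ^ k - 1) * R - fps_X ^ (m * Suc N)"], simp only: Fs R P Q E, simp add: algebra_simps)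
qed


lemma prod_nth: "finite A \<Longrightarrow> fps_nth (\<Prod>j\<in>A. 1 + fps_X ^ j :: int fps) n = int (card {B. B \<subseteq> A \<and> sum id B = n})"
proof (induction A arbitrary: n rule: finite_induct)
  case empty
  have "{B. B \<subseteq> {} \<and> sum id B = n} = (if n = 0 then {{}} else {})" by auto
  then show ?case by simp
next
  case (insert a A)
  let ?S = "\<lambda>m. {B. B \<subseteq> A \<and> sum id B = m}"
  have split: "{B. B \<subseteq> insert a A \<and> sum id B = n} = ?S n \<union> (if a \<le> n then insert a ` ?S (n - a) else {})"
  proof (intro equalityI subsetI)
    fix B assume B: "B \<in> {B. B \<subseteq> insert a A \<and> sum id B = n}"
    show "B \<in> ?S n \<union> (if a \<le> n then insert a ` ?S (n - a) else {})"
    proof (cases "a \<in> B")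
      case True
      have finB: "finite B" using B insert(1) finite_subset by (metis finite_insert mem_Collect_eq)
      have "sum id B = id a + sum id (B - {a})" by (rule sum.remove[OF finB True])
      then have "a \<le> n" "sum id (B - {a}) = n - a" using B by auto
      moreover have "B = insert a (B - {a})" using True by auto
      moreover have "B - {a} \<subseteq> A" using B by auto
      ultimately show ?thesis by (auto intro!: image_eqI[of _ _ "B - {a}"])
    next
      case False then show ?thesis using B by auto
    qed
  next
    fix B assume "B \<in> ?S n \<union> (if a \<le> n then insert a ` ?S (n - a) else {})"
    then show "B \<in> {B. B \<subseteq> insert a A \<and> sum id B = n}"
    proof (cases "B \<in> ?S n")
      case False
      with \<open>B \<in> _\<close> obtain B' where "a \<le> n" "B = insert a B'" "B' \<subseteq> A" "sum id B' = n - a"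
        by (auto split: if_splits)
      moreover have "finite B'" using \<open>B' \<subseteq> A\<close> insert(1) finite_subset by blast
      moreover have "a \<notin> B'" using \<open>B' \<subseteq> A\<close> insert(2) by blast
      ultimately show ?thesis by auto
    qed auto
  qed
  have disj: "?S n \<inter> (if a \<le> n then insert a ` ?S (n - a) else {}) = {}" using insert(2) by auto
  have finS: "finite (?S m)" for m by (rule finite_subset[of _ "Pow A"]) (use insert(1) in auto)
  have inj: "inj_on (insert a) (?S m)" for m using insert(2) by (intro inj_onI) (metis (no_types, lifting) mem_Collect_eq subsetD insert_ident)
  have card_split: "card {B. B \<subseteq> insert a A \<and> sum id B = n} = card (?S n) + (if a \<le> n then card (?S (n - a)) else 0)"
    unfolding split using disj finS inj by (subst card_Un_disjoint) (auto simp: card_image)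
  have "fps_nth (\<Prod>j\<in>insert a A. 1 + fps_X ^ j :: int fps) n
      = fps_nth ((\<Prod>j\<in>A. 1 + fps_X ^ j) + fps_X ^ a * (\<Prod>j\<in>A. 1 + fps_X ^ j) :: int fps) n"
    using insert by (simp add: algebra_simps)
  also have "\<dots> = int (card (?S n)) + (if a \<le> n then int (card (?S (n - a))) else 0)"
    by (simp only: fps_add_nth fps_X_power_mult_nth insert.IH) simp
  finally show ?case using card_split by simp
qed


lemma mem_le_sum_mset: "x \<in># (p :: nat multiset) \<Longrightarrow> x \<le> sum_mset p"
proof -
  assume a: "x \<in># p"
  have "sum_mset (add_mset x (p - {#x#})) = x + sum_mset (p - {#x#})" by simp
  then have "sum_mset p = x + sum_mset (p - {#x#})" by (simp only: insert_DiffM[OF a])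
  then show ?thesis by simp
qed

lemma sum_mset_mset_set: "finite B \<Longrightarrow> sum_mset (mset_set B) = sum id (B :: nat set)"
  by (simp add: sum_unfold_sum_mset)

definition TT :: "nat \<Rightarrow> nat \<Rightarrow> nat \<Rightarrow> (nat \<times> nat set) set" where
  "TT k N n = (SIGMA t:{..<N}. {B. B \<subseteq> {Suc t<..N} \<and> sum id B + k * Suc t = n})"

lemma bij_TT:
  assumes k: "1 \<le> k" and nN: "n \<le> N"
  shows "bij_betw (\<lambda>(t, B). replicate_mset k (Suc t) + mset_set B) (TT k N n) (Sptkd k n)"
proof (rule bij_betw_byWitness[where f' = "\<lambda>p. (Min (set_mset p) - 1, set_mset p - {Min (set_mset p)})"])
  have setf: "set_mset (replicate_mset k (Suc t) + mset_set B) = insert (Suc t) B"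
    if "B \<subseteq> {Suc t<..N}" for t B
  proof -
    have "finite B" using that finite_subset by blast
    then show ?thesis using k by auto
  qed
  have minf: "Min (insert (Suc t) B) = Suc t" if "B \<subseteq> {Suc t<..N}" for t B
  proof -
    have "finite B" using that finite_subset by blast
    then show ?thesis using that by (intro Min_eqI) auto
  qed
  show "\<forall>a\<in>TT k N n. (\<lambda>p. (Min (set_mset p) - 1, set_mset p - {Min (set_mset p)}))
          ((\<lambda>(t, B). replicate_mset k (Suc t) + mset_set B) a) = a"
  proof
    fix a assume "a \<in> TT k N n"
    then obtain t B where a: "a = (t, B)" "B \<subseteq> {Suc t<..N}" by (auto simp: TT_def)
    then have "Suc t \<notin> B" by auto
    then show "(\<lambda>p. (Min (set_mset p) - 1, set_mset p - {Min (set_mset p)}))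
          ((\<lambda>(t, B). replicate_mset k (Suc t) + mset_set B) a) = a"
      using a setf[OF a(2)] minf[OF a(2)] by simp
  qed
  show "(\<lambda>(t, B). replicate_mset k (Suc t) + mset_set B) ` TT k N n \<subseteq> Sptkd k n"
  proof
    fix p assume "p \<in> (\<lambda>(t, B). replicate_mset k (Suc t) + mset_set B) ` TT k N n"
    then obtain t B where p: "p = replicate_mset k (Suc t) + mset_set B" and B: "B \<subseteq> {Suc t<..N}"
      and sB: "sum id B + k * Suc t = n" by (auto simp: TT_def)
    have fB: "finite B" using B finite_subset by blast
    have sp: "set_mset p = insert (Suc t) B" using setf[OF B] p by simp
    have mn: "Min (set_mset p) = Suc t" using sp minf[OF B] by simp
    have "Suc t \<notin> B" using B by auto
    show "p \<in> Sptkd k n" unfolding Sptkd_def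
    proof (intro CollectI conjI ballI impI)
      show "0 < x" if "x \<in># p" for x using that sp B by auto
      show "sum_mset p = n" using p fB sB by (simp add: sum_mset_mset_set)
      show "p \<noteq> {#}" using sp by auto
      show "count p (Min (set_mset p)) = k" using mn p fB \<open>Suc t \<notin> B\<close> by simp
      show "count p x = 1" if "x \<in># p" "Min (set_mset p) < x" for x
        using that mn sp p fB k by auto
    qed
  qed
  show "\<forall>b\<in>Sptkd k n. (\<lambda>(t, B). replicate_mset k (Suc t) + mset_set B)
          ((\<lambda>p. (Min (set_mset p) - 1, set_mset p - {Min (set_mset p)})) b) = b"
  proof
    fix p assume p: "p \<in> Sptkd k n"
    let ?s = "Min (set_mset p)"
    have ne: "set_mset p \<noteq> {}" and pos: "\<forall>x\<in>#p. 0 < x" and cnt: "count p ?s = k"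
      and oth: "\<forall>x\<in>#p. ?s < x \<longrightarrow> count p x = 1"
      using p by (auto simp: Sptkd_def)
    have s0: "0 < ?s" using pos ne by auto
    have "replicate_mset k ?s + mset_set (set_mset p - {?s}) = p"
    proof (rule multiset_eqI)
      fix x show "count (replicate_mset k ?s + mset_set (set_mset p - {?s})) x = count p x"
      proof (cases "x \<in># p")
        case True
        then have sx: "?s \<le> x" by simp
        show ?thesis
        proof (cases "x = ?s")
          case True then show ?thesis using cnt by simp
        next
          case False
          then have "?s < x" using sx by simp
          then have "count p x = 1" using oth \<open>x \<in># p\<close> by blast
          moreover have "x \<in> set_mset p - {?s}" using False \<open>x \<in># p\<close> by simp
          ultimately show ?thesis using False by simp
        qed
      next
        case False
        then have "x \<noteq> ?s" using ne by auto
        then show ?thesis using False by (simp add: not_in_iff)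
      qed
    qed
    then show "(\<lambda>(t, B). replicate_mset k (Suc t) + mset_set B)
          ((\<lambda>p. (Min (set_mset p) - 1, set_mset p - {Min (set_mset p)})) p) = p"
      using s0 by simp
  qed
  show "(\<lambda>p. (Min (set_mset p) - 1, set_mset p - {Min (set_mset p)})) ` Sptkd k n \<subseteq> TT k N n"
  proof
    fix q assume "q \<in> (\<lambda>p. (Min (set_mset p) - 1, set_mset p - {Min (set_mset p)})) ` Sptkd k n"
    then obtain p where q: "q = (Min (set_mset p) - 1, set_mset p - {Min (set_mset p)})" and p: "p \<in> Sptkd k n"
      by auto
    let ?s = "Min (set_mset p)"
    have ne: "set_mset p \<noteq> {}" and pos: "\<forall>x\<in>#p. 0 < x" and cnt: "count p ?s = k"
      and oth: "\<forall>x\<in>#p. ?s < x \<longrightarrow> count p x = 1" and sp: "sum_mset p = n"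
      using p by (auto simp: Sptkd_def)
    have s0: "0 < ?s" using pos ne by auto
    have sin: "?s \<in># p" using ne by simp
    have le: "x \<le> N" if "x \<in># p" for x using mem_le_sum_mset[OF that] sp nN by simp
    have eq: "replicate_mset k ?s + mset_set (set_mset p - {?s}) = p"
    proof (rule multiset_eqI)
      fix x show "count (replicate_mset k ?s + mset_set (set_mset p - {?s})) x = count p x"
      proof (cases "x \<in># p")
        case True
        then have sx: "?s \<le> x" by simp
        show ?thesis
        proof (cases "x = ?s")
          case True then show ?thesis using cnt by simp
        next
          case False
          then have "?s < x" using sx by simp
          then have "count p x = 1" using oth \<open>x \<in># p\<close> by blast
          moreover have "x \<in> set_mset p - {?s}" using False \<open>x \<in># p\<close> by simp
          ultimately show ?thesis using False by simp
        qed
      next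
        case False
        then have "x \<noteq> ?s" using ne by auto
        then show ?thesis using False by (simp add: not_in_iff)
      qed
    qed
    have "sum_mset p = k * ?s + sum id (set_mset p - {?s})"
      by (subst eq[symmetric]) (simp add: sum_mset_mset_set)
    then have sumB: "sum id (set_mset p - {?s}) + k * Suc (?s - 1) = n" using sp s0 by simp
    have lt: "?s - 1 < N" using le[OF sin] s0 by simp
    have sub: "set_mset p - {?s} \<subseteq> {Suc (?s - 1)<..N}"
    proof
      fix x assume "x \<in> set_mset p - {?s}"
      then have xp: "x \<in># p" and xs: "x \<noteq> ?s" by auto
      have "?s \<le> x" using xp by simp
      then have "?s < x" using xs by (simp add: order_le_neq_trans)
      moreover have "x \<le> N" using le xp by simp
      ultimately have "?s < x" "x \<le> N" by auto
      then show "x \<in> {Suc (?s - 1)<..N}" using s0 by simp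
    qed
    show "q \<in> TT k N n" unfolding TT_def q mem_Sigma_iff lessThan_iff mem_Collect_eq using lt sub sumB by (intro conjI)
  qed
qed
lemma F_nth:
  assumes k: "1 \<le> k" and nN: "n \<le> N"
  shows "fps_nth (F k N) n = int (sptkd k n)"
proof -
  let ?S = "\<lambda>t. {B. B \<subseteq> {Suc t<..N} \<and> sum id B + k * Suc t = n}"
  have finS: "finite (?S t)" for t by (rule finite_subset[of _ "Pow {Suc t<..N}"]) auto
  have tm: "fps_nth (fps_X ^ (k * Suc t) * G N (Suc t)) n = int (card (?S t))" for t
  proof (cases "n < k * Suc t")
    case True
    then have "?S t = {}" by auto
    then show ?thesis using True by (simp only: fps_X_power_mult_nth if_True card.empty of_nat_0)
  next
    case False
    then have eq: "?S t = {B. B \<subseteq> {Suc t<..N} \<and> sum id B = n - k * Suc t}" by auto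
    show ?thesis unfolding eq G_def fps_X_power_mult_nth if_not_P[OF False]
      by (rule prod_nth) simp
  qed
  have "fps_nth (F k N) n = (\<Sum>t<N. fps_nth (fps_X ^ (k * Suc t) * G N (Suc t)) n)"
    unfolding F_def by (simp add: fps_sum_nth)
  also have "\<dots> = (\<Sum>t<N. int (card (?S t)))" using tm by simp
  also have "\<dots> = int (\<Sum>t<N. card (?S t))" by simp
  also have "(\<Sum>t<N. card (?S t)) = card (TT k N n)"
    unfolding TT_def by (rule card_SigmaI[symmetric]) (use finS in auto)
  also have "card (TT k N n) = card (Sptkd k n)" by (rule bij_betw_same_card[OF bij_TT[OF k nN]])
  finally show ?thesis by (simp add: sptkd_def)
qed

theorem theorem1:
  fixes k :: nat
  assumes "1 \<le> k"
  shows "Abs_fps (\<lambda>n. if 1 \<le> n then int (sptkd k n) else 0)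
         = Ppoly k * qpoch_inf (- fps_X) + (-1) ^ k * qpoch fps_X (k - 1)"
proof (rule fps_ext)
  fix n
  have z: "sptkd k 0 = 0" using F_nth[OF assms, of 0 0] by (simp add: F_def)
  obtain R where R: "F k n = Ppoly k * G n 0 + (-1) ^ k * qpoch fps_X (k - 1) + fps_X ^ Suc n * R"
    using F_closed[OF assms] by blast
  have L: "fps_nth (Abs_fps (\<lambda>n. if 1 \<le> n then int (sptkd k n) else 0)) n = fps_nth (F k n) n"
    using F_nth[OF assms, of n n] z by (cases n) auto
  have M: "fps_nth (Ppoly k * G n 0) n = fps_nth (Ppoly k * qpoch_inf (- fps_X)) n"
    unfolding fps_mult_nth G0 by (intro sum.cong refl arg_cong2[where f="(*)"] qpoch_inf_nth[symmetric]) auto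
  show "fps_nth (Abs_fps (\<lambda>n. if 1 \<le> n then int (sptkd k n) else 0)) n
      = fps_nth (Ppoly k * qpoch_inf (- fps_X) + (-1) ^ k * qpoch fps_X (k - 1)) n"
    unfolding L R by (simp only: fps_add_nth fps_X_power_mult_nth M) simp
qed

end
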